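(* Let $\lambda$ be a nonzero real number and $n\ge2$ an integer. Then $$\sum_{k=2}^{n}(1)_{k-1,\frac{1}{\lambda}}\,\lambda^{k-2}\,S_{2,\lambda}(n,k)=(n-1)(1)_{n-1,\lambda}.$$
   Context: For real $y$, $\mu\neq 0$ and integer $k\ge0$: $(y)_{0,\mu}=1$, $(y)_{k,\mu}=y(y-\mu)\cdots(y-(k-1)\mu)$ (used with $\mu=\lambda$ and $\mu=1/\lambda$); $(y)_0=1$, $(y)_k=y(y-1)\cdots(y-k+1)$. The degenerate Stirling numbers of the second kind are defined by $(x)_{n,\lambda}=\sum_{k=0}^{n}S_{2,\lambda}(n,k)(x)_{k}$ ($n\ge0$); equivalently $\frac{1}{k!}(e_\lambda(t)-1)^k=\sum_{n\ge k}S_{2,\lambda}(n,k)\frac{t^n}{n!}$ with $e_\lambda(t)=(1+\lambda t)^{1/\lambda}$. *)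

theory Defs
  imports "HOL-Analysis.Analysis"
begin

definition gen_fall :: "real \<Rightarrow> nat \<Rightarrow> real \<Rightarrow> real" where
  "gen_fall y k \<mu> = (\<Prod>i<k. y - real i * \<mu>)"

definition fall :: "real \<Rightarrow> nat \<Rightarrow> real" where
  "fall y k = (\<Prod>i<k. y - real i)"

definition S2_deg :: "real \<Rightarrow> nat \<Rightarrow> nat \<Rightarrow> real" where
  "S2_deg l n = (THE s. (\<forall>k>n. s k = 0) \<and>
      (\<forall>x::real. gen_fall x n l = (\<Sum>k\<le>n. s k * fall x k)))"

end

theory Submission
  imports Defs
begin

lemma fall_Suc: "fall x (Suc k) = fall x k * (x - real k)"
  by (simp add: fall_def)

lemma fall_Suc_shift: "fall x (Suc k) = x * fall (x - 1) k"
  unfolding fall_def by (subst prod.lessThan_Suc_shift) (simp add: algebra_simps)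

lemma fall_zero: "j < k \<Longrightarrow> fall (real j) k = 0"
  unfolding fall_def by (rule prod_zero) auto

lemma fall_self: "fall (real j) j = fact j"
proof (induction j)
  case 0 then show ?case by (simp add: fall_def)
next
  case (Suc j)
  have "fall (real (Suc j)) (Suc j) = real (Suc j) * fall (real j) j"
    by (subst fall_Suc_shift) simp
  then show ?case using Suc by simp
qed

lemma uniq:
  assumes "\<forall>k>n. c k = 0" "\<forall>x. (\<Sum>k\<le>n. c k * fall x k) = 0"
  shows "c k = 0"
proof (induction k rule: less_induct)
  case (less k)
  show ?case
  proof (cases "k \<le> n")
    case False then show ?thesis using assms(1) by simp
  next
    case True
    have "0 = (\<Sum>i\<le>n. c i * fall (real k) i)" using assms(2) by simp
    also have "\<dots> = (\<Sum>i\<in>{k}. c i * fall (real k) i)"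
    proof (rule sum.mono_neutral_right)
      show "\<forall>i\<in>{..n} - {k}. c i * fall (real k) i = 0"
      proof
        fix i assume "i \<in> {..n} - {k}"
        then have "i < k \<or> k < i" by auto
        then show "c i * fall (real k) i = 0"
          using less fall_zero[of k i] by auto
      qed
    qed (use True in auto)
    also have "\<dots> = c k * fact k" by (simp add: fall_self)
    finally show ?thesis by simp
  qed
qed

fun S :: "real \<Rightarrow> nat \<Rightarrow> nat \<Rightarrow> real" where
  "S l 0 k = (if k = 0 then 1 else 0)"
| "S l (Suc n) k = (case k of 0 \<Rightarrow> 0 | Suc j \<Rightarrow> S l n j) + (real k - real n * l) * S l n k"

lemma S_zero: "n < k \<Longrightarrow> S l n k = 0"
proof (induction n arbitrary: k)
  case 0 then show ?case by simp
next
  case (Suc n) then show ?case by (cases k) auto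
qed

lemma S_expand: "gen_fall x n l = (\<Sum>k\<le>n. S l n k * fall x k)"
proof (induction n)
  case 0 then show ?case by (simp add: gen_fall_def fall_def)
next
  case (Suc n)
  have "gen_fall x (Suc n) l = gen_fall x n l * (x - real n * l)"
    by (simp add: gen_fall_def)
  also have "\<dots> = (\<Sum>k\<le>n. S l n k * fall x (Suc k)) + (\<Sum>k\<le>n. (real k - real n * l) * S l n k * fall x k)"
    unfolding Suc sum_distrib_right sum.distrib[symmetric]
    by (rule sum.cong) (auto simp: fall_Suc algebra_simps)
  also have "(\<Sum>k\<le>n. S l n k * fall x (Suc k)) = (\<Sum>k\<le>Suc n. (case k of 0 \<Rightarrow> 0 | Suc j \<Rightarrow> S l n j) * fall x k)"
    by (subst sum.atMost_Suc_shift) simp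
  also have "(\<Sum>k\<le>n. (real k - real n * l) * S l n k * fall x k) = (\<Sum>k\<le>Suc n. (real k - real n * l) * S l n k * fall x k)"
    by (simp add: S_zero)
  finally show ?case by (simp add: sum.distrib[symmetric] algebra_simps)
qed

lemma S2_deg_prop: "\<forall>x. gen_fall x n l = (\<Sum>k\<le>n. S2_deg l n k * fall x k)"
proof -
  let ?P = "\<lambda>s. (\<forall>k>n. s k = 0) \<and> (\<forall>x::real. gen_fall x n l = (\<Sum>k\<le>n. s k * fall x k))"
  have "?P (S l n)" using S_zero S_expand by auto
  moreover have "t = S l n" if "?P t" for t
  proof
    fix k
    have "(\<lambda>k. t k - S l n k) k = 0"
    proof (rule uniq[of n])
      show "\<forall>k>n. t k - S l n k = 0" using that S_zero by auto
      show "\<forall>x. (\<Sum>k\<le>n. (t k - S l n k) * fall x k) = 0"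
        using that S_expand by (simp add: left_diff_distrib sum_subtractf)
    qed
    then show "t k = S l n k" by simp
  qed
  ultimately have "?P (THE s. ?P s)" by (rule theI)
  then show ?thesis unfolding S2_deg_def by blast
qed

lemma gen_fall_inv: "l \<noteq> 0 \<Longrightarrow> gen_fall 1 (Suc m) (1 / l) * l ^ m = fall (l - 1) m"
proof (induction m)
  case 0 then show ?case by (simp add: gen_fall_def fall_def)
next
  case (Suc m)
  have "gen_fall 1 (Suc (Suc m)) (1 / l) * l ^ Suc m
      = (gen_fall 1 (Suc m) (1 / l) * l ^ m) * (l * (1 - real (Suc m) / l))"
    by (simp add: gen_fall_def algebra_simps)
  also have "l * (1 - real (Suc m) / l) = l - 1 - real m" using Suc.prems by (simp add: field_simps)
  finally show ?case using Suc by (simp add: fall_Suc)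
qed

theorem theorem15:
  fixes l :: real and n :: nat
  assumes "l \<noteq> 0" and "n \<ge> 2"
  shows "(\<Sum>k=2..n. gen_fall 1 (k - 1) (1 / l) * l ^ (k - 2) * S2_deg l n k)
         = real (n - 1) * gen_fall 1 (n - 1) l"
proof -
  define s where "s = S2_deg l n"
  have P: "\<And>x. gen_fall x n l = (\<Sum>k\<le>n. s k * fall x k)"
    using S2_deg_prop unfolding s_def by blast
  obtain m where m: "n = Suc (Suc m)" using assms(2) by (intro that[of "n - 2"]) arith
  define g where "g x = (\<Sum>k=2..n. s k * fall (x - 2) (k - 2))" for x
  define Q where "Q x = (\<Prod>i<Suc m. x - real (Suc i) * l)" for x
  have split: "(\<Sum>k\<le>n. f k) = f 0 + f 1 + (\<Sum>k=2..n. f k)" for f :: "nat \<Rightarrow> real"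
  proof -
    have "{..n} = {0, 1} \<union> {2..n}" using assms(2) by (auto simp: atLeastAtMost_iff)
    then show ?thesis by (simp add: sum.union_disjoint)
  qed
  have fall2: "fall x k = x * (x - 1) * fall (x - 2) (k - 2)" if "k \<ge> 2" for x k
  proof -
    have e: "k = Suc (Suc (k - 2))" using that by arith
    have "fall x (Suc (Suc (k - 2))) = x * (x - 1) * fall (x - 2) (k - 2)"
      by (simp only: fall_Suc_shift) (simp add: algebra_simps)
    then show ?thesis using e by metis
  qed
  have sumfall: "(\<Sum>k=2..n. s k * fall x k) = x * (x - 1) * g x" for x
    unfolding g_def sum_distrib_left by (rule sum.cong) (auto simp: fall2)
  have expand: "gen_fall x n l = s 0 + s 1 * x + x * (x - 1) * g x" for x
    using P[of x] split sumfall by (simp add: fall_def)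
  have gQ: "gen_fall x n l = x * Q x" for x
    unfolding m gen_fall_def Q_def by (subst prod.lessThan_Suc_shift) simp
  have s0: "s 0 = 0" using expand[of 0] gQ[of 0] by simp
  have s1: "s 1 = gen_fall 1 n l" using expand[of 1] s0 by simp
  define F where "F x = Q x - s 1 - (x - 1) * g x" for x
  have F0: "F x = 0" if "x \<noteq> 0" for x
  proof -
    have "x * F x = 0" using expand[of x] gQ[of x] s0 unfolding F_def by (simp add: algebra_simps)
    then show ?thesis using that by simp
  qed
  have cont: "isCont F 0" unfolding F_def Q_def g_def fall_def
    by (intro continuous_intros)
  have "(F \<longlongrightarrow> F 0) (at 0)" using cont by (simp add: isCont_def)
  moreover have "(F \<longlongrightarrow> 0) (at 0)"
  proof (rule tendsto_eventually)
    show "\<forall>\<^sub>F x in at 0. F x = 0" using F0 by (simp add: eventually_at_filter)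
  qed
  ultimately have "F 0 = 0" using tendsto_unique by (metis trivial_limit_at)
  then have Fall: "F x = 0" for x using F0 by (cases "x = 0") auto
  have "Q (l + 1) - s 1 = l * g (l + 1)" using Fall[of "l+1"] unfolding F_def by simp
  moreover have "Q (l + 1) = gen_fall 1 (Suc m) l"
    unfolding Q_def gen_fall_def by (rule prod.cong) (auto simp: algebra_simps)
  moreover have "s 1 = gen_fall 1 (Suc m) l * (1 - real (Suc m) * l)"
    using s1 m by (simp add: gen_fall_def)
  ultimately have "l * g (l + 1) = l * (real (Suc m) * gen_fall 1 (Suc m) l)"
    by (simp add: algebra_simps)
  then have gl: "g (l + 1) = real (n - 1) * gen_fall 1 (n - 1) l"
    using assms(1) m by simp
  have "(\<Sum>k=2..n. gen_fall 1 (k - 1) (1 / l) * l ^ (k - 2) * S2_deg l n k) = g (l + 1)"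
    unfolding g_def s_def
  proof (rule sum.cong)
    fix k assume "k \<in> {2..n}"
    then obtain j where j: "k = Suc (Suc j)" by (intro that[of "k - 2"]) auto
    have "gen_fall 1 (k - 1) (1 / l) * l ^ (k - 2) = fall (l - 1) j"
      using gen_fall_inv[OF assms(1), of j] j by simp
    then show "gen_fall 1 (k - 1) (1 / l) * l ^ (k - 2) * S2_deg l n k = S2_deg l n k * fall (l + 1 - 2) (k - 2)"
      using j by simp
  qed simp
  then show ?thesis using gl by simp
qed

end
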